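(* Let $$k_u=\frac{1}{2\pi}\Big(1+\sqrt2\sum_{m=1}^{\infty}\frac{\beta_m}{\sinh\beta_m}\Big).$$ Then $k_u<\infty$, and the PZD conditional density satisfies the following bounds. (1) For all $r>0$, $r_0\ge0$ and $\phi,\phi_0\in[0,2\pi)$: $$p(r,\phi\mid r_0,\phi_0)<k_u\,p_{R|R_0}(r\mid r_0).$$ Moreover, for all $r,r_0\ge0$: $$p_{R|R_0}(r\mid r_0)\le\frac{2r}{\sigma^2\mathcal L}e^{-\frac{(r-r_0)^2}{\sigma^2\mathcal L}}\le\frac{2r}{\sigma^2\mathcal L}.$$ (2) For all $r,r_0\ge0$ and $\phi,\phi_0$: $$p(r,\phi\mid r_0,\phi_0)\ge\frac{1}{2\pi}\,p_{R|R_0}(r\mid r_0)\,(1-\xi(r_0)),$$ where $$\xi(r_0)=\sqrt2\,e^{-\left(\Re(a_1)-\frac{1}{\sigma^2\mathcal L}\right)r_0^2}\sum_{m=1}^\infty\frac{\beta_m}{\sinh\beta_m}.$$ Furthermore, $\xi(r_0)\to0$ as $r_0\to\infty$.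
   Context: Fix constants $\gamma>0$, $\sigma>0$, $\mathcal L>0$, and let $j=\sqrt{-1}$. For $m\in\mathbb N$ let $\beta_m=\sqrt{m\gamma/2}\,\sigma\mathcal L$ and $$a_m=\frac{\sqrt{jm\gamma}}{\sigma}\coth\!\big(\sqrt{jm\gamma\sigma^2}\,\mathcal L\big),\qquad b_m=\frac{\sqrt{jm\gamma}}{\sigma}\,\frac{1}{\sinh\!\big(\sqrt{jm\gamma\sigma^2}\,\mathcal L\big)},$$ with principal square roots. $I_m$ denotes the modified Bessel function of the first kind of order $m$. The PZD channel conditional density (input polar coordinates $(r_0,\phi_0)$, output polar coordinates $(r,\phi)$) is $$p(r,\phi\mid r_0,\phi_0)=\frac{1}{2\pi}p_{R|R_0}(r\mid r_0)+\frac1\pi\sum_{m\ge1}\Re\!\Big(C_m(r,r_0)\,e^{jm(\phi-\phi_0-\gamma r_0^2\mathcal L)}\Big),$$ where $$p_{R|R_0}(r\mid r_0)=\frac{2r}{\sigma^2\mathcal L}e^{-\frac{r^2+r_0^2}{\sigma^2\mathcal L}}I_0\!\Big(\frac{2rr_0}{\sigma^2\mathcal L}\Big),\qquad C_m(r,r_0)=r\,b_m\,e^{-a_m(r^2+r_0^2)}I_m(2b_m r_0 r).$$ *)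

theory Defs
  imports "HOL-Analysis.Analysis"
begin

definition besselI :: "nat \<Rightarrow> complex \<Rightarrow> complex" where
  "besselI m z = (\<Sum>k. (z / 2) ^ (2 * k + m) / of_nat (fact k * fact (k + m)))"

definition ccoth :: "complex \<Rightarrow> complex" where
  "ccoth z = cosh z / sinh z"

definition pzd_beta :: "real \<Rightarrow> real \<Rightarrow> real \<Rightarrow> nat \<Rightarrow> real" where
  "pzd_beta \<gamma> \<sigma> L m = sqrt (real m * \<gamma> / 2) * \<sigma> * L"

definition pzd_a :: "real \<Rightarrow> real \<Rightarrow> real \<Rightarrow> nat \<Rightarrow> complex" where
  "pzd_a \<gamma> \<sigma> L m =
     csqrt (\<i> * of_nat m * of_real \<gamma>) / of_real \<sigma>
     * ccoth (csqrt (\<i> * of_nat m * of_real (\<gamma> * \<sigma>\<^sup>2)) * of_real L)"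

definition pzd_b :: "real \<Rightarrow> real \<Rightarrow> real \<Rightarrow> nat \<Rightarrow> complex" where
  "pzd_b \<gamma> \<sigma> L m =
     csqrt (\<i> * of_nat m * of_real \<gamma>) / of_real \<sigma>
     / sinh (csqrt (\<i> * of_nat m * of_real (\<gamma> * \<sigma>\<^sup>2)) * of_real L)"

definition pzd_pR :: "real \<Rightarrow> real \<Rightarrow> real \<Rightarrow> real \<Rightarrow> real" where
  "pzd_pR \<sigma> L r r0 =
     2 * r / (\<sigma>\<^sup>2 * L) * exp (- (r\<^sup>2 + r0\<^sup>2) / (\<sigma>\<^sup>2 * L))
     * Re (besselI 0 (of_real (2 * r * r0 / (\<sigma>\<^sup>2 * L))))"

definition pzd_C :: "real \<Rightarrow> real \<Rightarrow> real \<Rightarrow> nat \<Rightarrow> real \<Rightarrow> real \<Rightarrow> complex" where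
  "pzd_C \<gamma> \<sigma> L m r r0 =
     of_real r * pzd_b \<gamma> \<sigma> L m * exp (- pzd_a \<gamma> \<sigma> L m * of_real (r\<^sup>2 + r0\<^sup>2))
     * besselI m (2 * pzd_b \<gamma> \<sigma> L m * of_real (r0 * r))"

text \<open>PZD conditional density p(r, phi | r0, phi0); the sum runs over m = Suc n \<ge> 1.\<close>
definition pzd_p :: "real \<Rightarrow> real \<Rightarrow> real \<Rightarrow> real \<Rightarrow> real \<Rightarrow> real \<Rightarrow> real \<Rightarrow> real" where
  "pzd_p \<gamma> \<sigma> L r \<phi> r0 \<phi>0 =
     1 / (2 * pi) * pzd_pR \<sigma> L r r0
     + 1 / pi * (\<Sum>n. Re (pzd_C \<gamma> \<sigma> L (Suc n) r r0
          * exp (\<i> * of_nat (Suc n) * of_real (\<phi> - \<phi>0 - \<gamma> * r0\<^sup>2 * L))))"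

definition pzd_ku :: "real \<Rightarrow> real \<Rightarrow> real \<Rightarrow> real" where
  "pzd_ku \<gamma> \<sigma> L =
     1 / (2 * pi) * (1 + sqrt 2 * (\<Sum>n. pzd_beta \<gamma> \<sigma> L (Suc n) / sinh (pzd_beta \<gamma> \<sigma> L (Suc n))))"

definition pzd_xi :: "real \<Rightarrow> real \<Rightarrow> real \<Rightarrow> real \<Rightarrow> real" where
  "pzd_xi \<gamma> \<sigma> L r0 =
     sqrt 2 * exp (- (Re (pzd_a \<gamma> \<sigma> L 1) - 1 / (\<sigma>\<^sup>2 * L)) * r0\<^sup>2)
     * (\<Sum>n. pzd_beta \<gamma> \<sigma> L (Suc n) / sinh (pzd_beta \<gamma> \<sigma> L (Suc n)))"

end

theory Submission
  imports Defs "HOL-Real_Asymp.Real_Asymp"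
begin


lemma pos_by_deriv:
  fixes g g' :: "real \<Rightarrow> real"
  assumes "g 0 = 0" "\<And>x. (g has_real_derivative g' x) (at x)" "\<And>x. x > 0 \<Longrightarrow> g' x > 0" "x > 0"
  shows "g x > 0"
proof -
  have "g 0 < g x"
  proof (rule DERIV_pos_imp_increasing_open[OF \<open>x > 0\<close>])
    show "\<And>y. 0 < y \<Longrightarrow> y < x \<Longrightarrow> \<exists>z. (g has_real_derivative z) (at y) \<and> 0 < z"
      using assms by blast
    show "continuous_on {0..x} g"
      using assms(2) by (meson DERIV_continuous continuous_at_imp_continuous_on)
  qed
  with assms show ?thesis by simp
qed

lemma cosh_gt_1: "x \<noteq> 0 \<Longrightarrow> cosh (x::real) > 1"
  using cosh_real_ge_1[of x] cosh_real_one_iff[of x] by linarith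

lemma sinh_gt_self: assumes "x > 0" shows "sinh (x::real) > x"
proof -
  have "sinh x - x > 0"
    by (rule pos_by_deriv[of "\<lambda>x. sinh x - x" "\<lambda>x. cosh x - 1" x])
       (use assms cosh_gt_1 in \<open>auto intro!: derivative_eq_intros\<close>)
  thus ?thesis by simp
qed

lemma sinh_gt_sin: "x > 0 \<Longrightarrow> sinh (x::real) > sin x"
  using sinh_gt_self[of x] sin_x_le_x[of x] by linarith

lemma cosh_gt_cos: assumes "x > 0" shows "cosh (x::real) > cos x"
proof -
  have "cosh x \<noteq> 1" using assms by simp
  thus ?thesis using cosh_real_ge_1[of x] cos_le_one[of x] by linarith
qed

lemma P1a: assumes "x > 0" shows "cosh (x::real) + cos x - 2 > 0"
  by (rule pos_by_deriv[of "\<lambda>x. cosh x + cos x - 2" "\<lambda>x. sinh x - sin x" x]) (use assms in \<open>auto intro!: derivative_eq_intros simp: sinh_gt_sin\<close>)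

lemma P1b: assumes "x > 0" shows "sinh (x::real) + sin x - 2 * x > 0"
  by (rule pos_by_deriv[of "\<lambda>x. sinh x + sin x - 2 * x" "\<lambda>x. cosh x + cos x - 2" x]) (use assms in \<open>auto intro!: derivative_eq_intros simp: P1a[simplified]\<close>)

lemma P1: assumes "x > 0" shows "cosh (x::real) - cos x - x^2 > 0"
  by (rule pos_by_deriv[of "\<lambda>x. cosh x - cos x - x^2" "\<lambda>x. sinh x + sin x - 2 * x" x]) (use assms in \<open>auto intro!: derivative_eq_intros simp: P1b[simplified]\<close>)

lemma P2a: assumes "x > 0" shows "x * cosh (x::real) - sinh x + x * cos x - sin x > 0"
  by (rule pos_by_deriv[of "\<lambda>x. x * cosh (x::real) - sinh x + x * cos x - sin x" "\<lambda>x. x * (sinh x - sin x)" x]) (use assms in \<open>auto intro!: derivative_eq_intros simp: sinh_gt_sin algebra_simps\<close>)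

lemma P2: assumes "x > 0" shows "x * (sinh (x::real) + sin x) - 2 * (cosh x - cos x) > 0"
  by (rule pos_by_deriv[of "\<lambda>x. x * (sinh (x::real) + sin x) - 2 * (cosh x - cos x)" "\<lambda>x. x * cosh (x::real) - sinh x + x * cos x - sin x" x]) (use assms in \<open>auto intro!: derivative_eq_intros simp: algebra_simps dest: P2a\<close>)


lemma pair_ineq:
  fixes v1 v2 :: real and j k :: nat
  assumes "0 \<le> v1" "v1 \<le> v2"
  shows "(1 / real (k+1) - 1 / real (j+1)) * (v1^(j+1) * v2^(k+1) - v2^(j+1) * v1^(k+1)) \<le> 0"
proof (cases "j \<le> k")
  case True
  then obtain d where k: "k = j + d" using le_Suc_ex by blast
  have "v1^d \<le> v2^d" using assms by (simp add: power_mono)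
  hence "v2^(j+1) * v1^(k+1) \<le> v1^(j+1) * v2^(k+1)"
    using assms unfolding k by (simp add: power_add mult_left_mono mult.assoc mult.left_commute)
  moreover have "1 / real (k+1) - 1 / real (j+1) \<le> 0" using True by (simp add: frac_le)
  ultimately show ?thesis by (simp add: mult_nonpos_nonneg)
next
  case False
  then obtain d where j: "j = k + d" by (metis le_Suc_ex nle_le)
  have "v1^d \<le> v2^d" using assms by (simp add: power_mono)
  have e1: "v1^(j+1) * v2^(k+1) = v1^d * (v1^(k+1) * v2^(k+1))" unfolding j by (simp add: power_add algebra_simps)
  have e2: "v2^(j+1) * v1^(k+1) = v2^d * (v1^(k+1) * v2^(k+1))" unfolding j by (simp add: power_add algebra_simps)
  have "v1^d * (v1^(k+1) * v2^(k+1)) \<le> v2^d * (v1^(k+1) * v2^(k+1))"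
    using \<open>v1^d \<le> v2^d\<close> assms by (intro mult_right_mono) auto
  hence "v1^(j+1) * v2^(k+1) \<le> v2^(j+1) * v1^(k+1)" by (simp only: e1 e2)
  moreover have "1 / real (k+1) - 1 / real (j+1) \<ge> 0" using False by (simp add: frac_le)
  ultimately show ?thesis by (simp add: mult_nonneg_nonpos)
qed

lemma ratio_mono_finite:
  fixes s :: "nat \<Rightarrow> real"
  assumes s: "\<And>n. s n \<ge> 0" and v: "0 \<le> v1" "v1 \<le> v2"
  shows "(\<Sum>n<N. s n * v1^(n+1)) * (\<Sum>n<N. s n / (n+1) * v2^(n+1))
       \<le> (\<Sum>n<N. s n * v2^(n+1)) * (\<Sum>n<N. s n / (n+1) * v1^(n+1))"
proof -
  define T where "T j k = s j * s k * (v1^(j+1) * v2^(k+1) / real (k+1) - v2^(j+1) * v1^(k+1) / real (k+1))" for j k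
  have eq: "(\<Sum>n<N. s n * v1^(n+1)) * (\<Sum>n<N. s n / (n+1) * v2^(n+1))
       - (\<Sum>n<N. s n * v2^(n+1)) * (\<Sum>n<N. s n / (n+1) * v1^(n+1)) = (\<Sum>j<N. \<Sum>k<N. T j k)"
    unfolding T_def sum_product sum_subtractf[symmetric]
    by (intro sum.cong refl) (simp add: algebra_simps)
  have sw: "(\<Sum>j<N. \<Sum>k<N. T j k) = (\<Sum>j<N. \<Sum>k<N. T k j)" by (rule sum.swap[where g=T])
  have "2 * (\<Sum>j<N. \<Sum>k<N. T j k) = (\<Sum>j<N. \<Sum>k<N. T j k + T k j)"
    using sw by (simp add: sum.distrib)
  also have "\<dots> \<le> 0"
  proof (intro sum_nonpos)
    fix j k
    have "T j k + T k j = s j * s k * ((1 / real (k+1) - 1 / real (j+1)) * (v1^(j+1) * v2^(k+1) - v2^(j+1) * v1^(k+1)))"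
      unfolding T_def by (simp add: algebra_simps)
    also have "\<dots> \<le> 0"
      using pair_ineq[OF v, of k j] s[of j] s[of k] by (simp add: mult_nonneg_nonpos)
    finally show "T j k + T k j \<le> 0" .
  qed
  finally show ?thesis using eq by linarith
qed

definition scf :: "nat \<Rightarrow> real" where
  "scf n = (if even n then 0 else 1 / fact n) + sin_coeff n"

lemma scf_nonneg: "scf n \<ge> 0"
proof -
  have "\<bar>(- 1::real) ^ ((n - Suc 0) div 2)\<bar> = 1" by simp
  hence "(- 1::real) ^ ((n - Suc 0) div 2) \<ge> -1" by linarith
  hence "(- 1::real) / fact n \<le> (- 1::real) ^ ((n - Suc 0) div 2) / fact n"
    by (intro divide_right_mono) auto
  thus ?thesis unfolding scf_def sin_coeff_def by auto
qed

lemma sums_A: "(\<lambda>n. scf n * t^(n+1)) sums (t * (sinh t + sin t))"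
proof -
  have "(\<lambda>n. (if even n then 0 else t ^ n /\<^sub>R fact n) + sin_coeff n *\<^sub>R t^n) sums (sinh t + sin t)"
    by (intro sums_add sinh_converges sin_converges)
  note sm = sums_mult[OF this, of t]
  have eq: "(\<lambda>n. t * ((if even n then 0 else t ^ n /\<^sub>R fact n) + sin_coeff n *\<^sub>R t^n)) = (\<lambda>n. scf n * t^(n+1))"
  proof
    fix n show "t * ((if even n then 0 else t ^ n /\<^sub>R fact n) + sin_coeff n *\<^sub>R t^n) = scf n * t^(n+1)"
      by (cases "even n") (simp_all add: scf_def field_simps)
  qed
  show ?thesis using sm unfolding eq .
qed

lemma sums_B: "(\<lambda>n. scf n / (n+1) * t^(n+1)) sums (cosh t - cos t)"
proof -
  have "(\<lambda>n. (if even n then t ^ n /\<^sub>R fact n else 0) - cos_coeff n *\<^sub>R t^n) sums (cosh t - cos t)"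
    by (intro sums_diff cosh_converges cos_converges)
  hence "(\<lambda>n. (if even (Suc n) then t ^ (Suc n) /\<^sub>R fact (Suc n) else 0) - cos_coeff (Suc n) *\<^sub>R t^(Suc n)) sums (cosh t - cos t)"
    by (subst sums_Suc_iff) (simp add: cos_coeff_def)
  moreover have "(if even (Suc n) then t ^ (Suc n) /\<^sub>R fact (Suc n) else 0) - cos_coeff (Suc n) *\<^sub>R t^(Suc n)
      = scf n / (n+1) * t^(n+1)" for n
  proof (cases "even n")
    case True thus ?thesis by (simp add: cos_coeff_Suc scf_def sin_coeff_def)
  next
    case False
    have "(if even (Suc n) then t ^ (Suc n) /\<^sub>R fact (Suc n) else 0) - cos_coeff (Suc n) *\<^sub>R t^(Suc n)
        = (1 / fact n + sin_coeff n) / (n+1) * t^(n+1)"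
      using False by (simp add: cos_coeff_Suc divide_simps) (simp add: algebra_simps)
    thus ?thesis using False by (simp add: scf_def)
  qed
  ultimately show ?thesis by simp
qed

definition fA :: "real \<Rightarrow> real" where
  "fA x = x * (sinh x + sin x) / (cosh x - cos x)"

lemma fA_mono: assumes "0 < x" "x \<le> y" shows "fA x \<le> fA y"
proof -
  let ?A = "\<lambda>t N. \<Sum>n<N. scf n * t^(n+1)" and ?B = "\<lambda>t N. \<Sum>n<N. scf n / (n+1) * t^(n+1)"
  have "(\<lambda>N. ?A x N * ?B y N) \<longlonglongrightarrow> (x * (sinh x + sin x)) * (cosh y - cos y)"
    using sums_A sums_B unfolding sums_def by (intro tendsto_mult) auto
  moreover have "(\<lambda>N. ?A y N * ?B x N) \<longlonglongrightarrow> (y * (sinh y + sin y)) * (cosh x - cos x)"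
    using sums_A sums_B unfolding sums_def by (intro tendsto_mult) auto
  ultimately have "(x * (sinh x + sin x)) * (cosh y - cos y) \<le> (y * (sinh y + sin y)) * (cosh x - cos x)"
    by (rule LIMSEQ_le) (use ratio_mono_finite[OF scf_nonneg, of x y] assms in auto)
  moreover have "cosh x - cos x > 0" "cosh y - cos y > 0"
    using cosh_gt_cos[of x] cosh_gt_cos[of y] assms by auto
  ultimately have "x * (sinh x + sin x) * (cosh y - cos y) / ((cosh x - cos x) * (cosh y - cos y))
     \<le> y * (sinh y + sin y) * (cosh x - cos x) / ((cosh x - cos x) * (cosh y - cos y))"
    by (intro divide_right_mono) auto
  also have "y * (sinh y + sin y) * (cosh x - cos x) / ((cosh x - cos x) * (cosh y - cos y)) = fA y"
    unfolding fA_def using \<open>cosh x - cos x > 0\<close> by simp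
  also have "x * (sinh x + sin x) * (cosh y - cos y) / ((cosh x - cos x) * (cosh y - cos y)) = fA x"
    unfolding fA_def using \<open>cosh y - cos y > 0\<close> by simp
  finally show ?thesis .
qed
definition G :: "real \<Rightarrow> nat \<Rightarrow> real" where
  "G q n = q^(2*n) / (fact n)^2"

definition I0 :: "real \<Rightarrow> real" where
  "I0 x = (\<Sum>n. G (x/2) n)"

lemma G_nonneg: "G q n \<ge> 0"
  unfolding G_def by (simp add: power_mult)

lemma G_summable: "summable (G q)"
proof (rule summable_comparison_test[OF _ summable_exp[of "q^2"]])
  show "\<exists>N. \<forall>n\<ge>N. norm (G q n) \<le> inverse (fact n) * (q^2)^n"
  proof (intro exI allI impI)
    fix n :: nat
    have f1: "(1::real) \<le> fact n" by simp
    have "G q n = (q^2)^n / (fact n * fact n)"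
      unfolding G_def by (simp add: power_mult power2_eq_square)
    also have "\<dots> \<le> (q^2)^n / fact n"
      using f1 by (intro divide_left_mono) (auto simp: power_mult)
    finally show "norm (G q n) \<le> inverse (fact n) * (q^2)^n"
      using G_nonneg[of q n] by (simp add: field_simps)
  qed
qed

lemma G_shift_le: "(\<Sum>k. G q (k + j)) \<le> (\<Sum>n. G q n)"
proof -
  have "(\<Sum>k. G q (k + j)) = (\<Sum>n. G q n) - (\<Sum>i<j. G q i)"
    by (rule suminf_minus_initial_segment[OF G_summable])
  moreover have "(\<Sum>i<j. G q i) \<ge> 0" by (intro sum_nonneg G_nonneg)
  ultimately show ?thesis by linarith
qed

lemma fact_shift_le:
  assumes "i \<le> j"
  shows "fact (i + d) * fact j \<le> (fact i * fact (j + d) :: nat)"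
proof (induction d)
  case 0 thus ?case by simp
next
  case (Suc d)
  have "fact (i + Suc d) * fact j = (i + d + 1) * (fact (i + d) * fact j)"
    by (simp add: algebra_simps)
  also have "\<dots> \<le> (i + d + 1) * (fact i * fact (j + d))"
    using Suc.IH by (intro mult_left_mono) auto
  also have "\<dots> \<le> (j + d + 1) * (fact i * fact (j + d))"
    using assms by (intro mult_right_mono) auto
  also have "\<dots> = fact i * fact (j + Suc d)"
    by (simp add: algebra_simps)
  finally show ?case .
qed

lemma amgm2: "u * v \<le> (u^2 + v^2) / (2::real)"
proof -
  have "0 \<le> (u - v)^2" by simp
  moreover have "(u - v)^2 = u^2 - 2 * (u * v) + v^2" by (simp add: power2_diff mult.assoc)
  ultimately have "2 * (u * v) \<le> u^2 + v^2" by linarith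
  thus ?thesis by simp
qed

lemma term_bound:
  fixes z :: complex
  defines "q \<equiv> norm z / 2"
  shows "norm ((z / 2) ^ (2 * k + m) / of_nat (fact k * fact (k + m)))
     \<le> (G q (k + m div 2) + G q (k + (m - m div 2))) / 2"
proof -
  define a where "a = k + m div 2"
  define b where "b = k + (m - m div 2)"
  have ab: "a + b = 2 * k + m" unfolding a_def b_def by simp
  have q0: "q \<ge> 0" unfolding q_def by simp
  have "fact a * fact b \<le> (fact k * fact (k + m) :: nat)"
    using fact_shift_le[of k "k + (m - m div 2)" "m div 2"] unfolding a_def b_def
    by (simp add: add.assoc)
  hence fle: "real (fact a * fact b) \<le> real (fact k * fact (k + m))" by linarith
  have fpos: "real (fact a * fact b) > 0" by simp
  have "norm ((z / 2) ^ (2 * k + m) / of_nat (fact k * fact (k + m))) = q ^ (a + b) / real (fact k * fact (k + m))"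
    unfolding q_def ab norm_divide norm_of_nat norm_power by simp
  also have "\<dots> \<le> q ^ (a + b) / real (fact a * fact b)"
    using fle fpos q0 by (intro divide_left_mono) auto
  also have "\<dots> = (q^a / fact a) * (q^b / fact b)"
    by (simp add: power_add)
  also have "\<dots> \<le> ((q^a / fact a)^2 + (q^b / fact b)^2) / 2"
    by (rule amgm2)
  also have "\<dots> = (G q a + G q b) / 2"
    unfolding G_def by (simp add: power_divide power_mult power2_eq_square[symmetric] mult.commute)
  finally show ?thesis unfolding a_def b_def .
qed

lemma besselI_bound:
  "summable (\<lambda>k. norm ((z / 2) ^ (2 * k + m) / of_nat (fact k * fact (k + m))))"
  "norm (besselI m z) \<le> I0 (norm z)"
proof -
  let ?q = "norm z / 2"
  let ?t = "\<lambda>k. (z / 2) ^ (2 * k + m) / of_nat (fact k * fact (k + m))"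
  let ?g = "\<lambda>k. (G ?q (k + m div 2) + G ?q (k + (m - m div 2))) / 2"
  have s1: "summable (\<lambda>k. G ?q (k + m div 2))" "summable (\<lambda>k. G ?q (k + (m - m div 2)))"
    using G_summable summable_ignore_initial_segment by blast+
  have sg: "summable ?g" using s1 by (intro summable_divide summable_add)
  show sn: "summable (\<lambda>k. norm (?t k))"
    by (rule summable_comparison_test[OF _ sg]) (use term_bound in auto)
  have "norm (besselI m z) \<le> (\<Sum>k. norm (?t k))"
    unfolding besselI_def by (rule summable_norm[OF sn])
  also have "\<dots> \<le> (\<Sum>k. ?g k)"
    by (rule suminf_le[OF _ sn sg]) (rule term_bound)
  also have "\<dots> = (\<Sum>k. G ?q (k + m div 2) + G ?q (k + (m - m div 2))) / 2"
    by (rule suminf_divide) (intro summable_add s1)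
  also have "\<dots> = ((\<Sum>k. G ?q (k + m div 2)) + (\<Sum>k. G ?q (k + (m - m div 2)))) / 2"
    using suminf_add[OF s1] by simp
  also have "\<dots> \<le> I0 (norm z)"
    unfolding I0_def using G_shift_le[of ?q "m div 2"] G_shift_le[of ?q "m - m div 2"] by simp
  finally show "norm (besselI m z) \<le> I0 (norm z)" .
qed

lemma I0_mono: assumes "0 \<le> x" "x \<le> y" shows "I0 x \<le> I0 y"
  unfolding I0_def
proof (rule suminf_le[OF _ G_summable G_summable])
  fix n show "G (x/2) n \<le> G (y/2) n"
    unfolding G_def using assms by (intro divide_right_mono power_mono) auto
qed

lemma I0_ge1: "I0 x \<ge> 1"
proof -
  have "(\<Sum>n<1. G (x/2) n) \<le> I0 x"
    unfolding I0_def by (rule sum_le_suminf[OF G_summable]) (auto simp: G_nonneg)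
  thus ?thesis by (simp add: G_def)
qed

lemma sum_sq_le_sq_sum: fixes N :: nat shows "(\<And>n. a n \<ge> (0::real)) \<Longrightarrow> (\<Sum>n<N. (a n)^2) \<le> (\<Sum>n<N. a n)^2"
proof (induction N)
  case 0 thus ?case by simp
next
  case (Suc N)
  have "(\<Sum>n<N. a n) \<ge> 0" using Suc.prems by (intro sum_nonneg) auto
  hence "(\<Sum>n<N. a n)^2 + (a N)^2 \<le> ((\<Sum>n<N. a n) + a N)^2"
    using Suc.prems[of N] by (simp add: power2_eq_square algebra_simps)
  thus ?case using Suc by simp
qed

lemma I0_le_exp: assumes "x \<ge> 0" shows "I0 x \<le> exp x"
  unfolding I0_def
proof (rule suminf_le_const[OF G_summable])
  fix N
  let ?a = "\<lambda>n. (x/2)^n / fact n"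
  have sm: "?a sums exp (x/2)" using exp_converges[of "x/2"] by (simp only: real_scaleR_def divide_inverse_commute)
  have "sum ?a {..<N} \<le> suminf ?a"
    by (rule sum_le_suminf[OF sums_summable[OF sm]]) (use assms in auto)
  hence sa: "sum ?a {..<N} \<le> exp (x/2)" using sums_unique[OF sm] by simp
  have "(\<Sum>n<N. G (x/2) n) = (\<Sum>n<N. (?a n)^2)"
    unfolding G_def by (simp add: power_divide power_mult mult.commute power_mult_distrib)
  also have "\<dots> \<le> (\<Sum>n<N. ?a n)^2"
    by (rule sum_sq_le_sq_sum) (use assms in auto)
  also have "\<dots> \<le> (exp (x/2))^2"
    using assms sa by (intro power_mono sum_nonneg) auto
  also have "(exp (x/2))^2 = exp x" by (simp add: power2_eq_square exp_add[symmetric])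
  finally show "(\<Sum>n<N. G (x/2) n) \<le> exp x" .
qed

lemma besselI0_real: "besselI 0 (of_real x) = of_real (I0 x)"
proof -
  have "of_real (I0 x) = (\<Sum>n. complex_of_real (G (x/2) n))"
    unfolding I0_def by (rule suminf_of_real[OF G_summable])
  also have "\<dots> = besselI 0 (of_real x)"
    unfolding besselI_def G_def by (simp add: power_divide power_mult power2_eq_square)
  finally show ?thesis ..
qed




lemma sinh_of_real': "sinh (complex_of_real x) = of_real (sinh x)"
  by (simp add: sinh_field_def exp_of_real[symmetric] exp_minus)

lemma cosh_of_real': "cosh (complex_of_real x) = of_real (cosh x)"
  by (simp add: cosh_field_def exp_of_real[symmetric] exp_minus)

lemma sinh_w: "sinh (of_real b * (1 + \<i>)) = Complex (sinh b * cos b) (cosh b * sin b)"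
proof -
  have e: "of_real b * (1 + \<i>) = of_real b + \<i> * of_real b" by (simp add: algebra_simps)
  have c: "cosh (\<i> * complex_of_real b) = of_real (cos b)"
    by (simp add: cosh_conv_cos cos_of_real)
  have s: "sinh (\<i> * complex_of_real b) = \<i> * of_real (sin b)"
    by (simp add: sinh_conv_sin sin_of_real)
  show ?thesis unfolding e sinh_add c s sinh_of_real' cosh_of_real'
    by (simp add: complex_eq_iff)
qed

lemma cosh_w: "cosh (of_real b * (1 + \<i>)) = Complex (cosh b * cos b) (sinh b * sin b)"
proof -
  have e: "of_real b * (1 + \<i>) = of_real b + \<i> * of_real b" by (simp add: algebra_simps)
  have c: "cosh (\<i> * complex_of_real b) = of_real (cos b)"
    by (simp add: cosh_conv_cos cos_of_real)
  have s: "sinh (\<i> * complex_of_real b) = \<i> * of_real (sin b)"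
    by (simp add: sinh_conv_sin sin_of_real)
  show ?thesis unfolding e cosh_add c s sinh_of_real' cosh_of_real'
    by (simp add: complex_eq_iff)
qed

definition Dn :: "real \<Rightarrow> real" where
  "Dn b = (sinh b)^2 + (sin b)^2"

definition Ab :: "real \<Rightarrow> real" where
  "Ab b = b * (sinh b * cosh b + sin b * cos b) / Dn b"

definition Kb :: "real \<Rightarrow> real" where
  "Kb b = sqrt 2 * b / sqrt (Dn b)"

lemma norm_sinh_w: "(norm (sinh (of_real b * (1 + \<i>))))^2 = Dn b"
proof -
  have "(norm (sinh (of_real b * (1 + \<i>))))^2 = (sinh b * cos b)^2 + (cosh b * sin b)^2"
    unfolding sinh_w cmod_power2 by simp
  also have "\<dots> = (sinh b)^2 * ((sin b)^2 + (cos b)^2) + ((cosh b)^2 - (sinh b)^2) * (sin b)^2"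
    by algebra
  also have "\<dots> = (sinh b)^2 * 1 + 1 * (sin b)^2"
    by (simp only: sin_cos_squared_add hyperbolic_pythagoras)
  also have "\<dots> = Dn b" unfolding Dn_def by simp
  finally show ?thesis .
qed

lemma Re_w_coth: "Re (of_real b * (1 + \<i>) * cosh (of_real b * (1 + \<i>)) / sinh (of_real b * (1 + \<i>))) = Ab b"
proof -
  have h1: "Re (of_real b * (1 + \<i>) * cosh (of_real b * (1 + \<i>)) / sinh (of_real b * (1 + \<i>)))
     = b * (sinh b * cosh b * ((sin b)^2 + (cos b)^2) + sin b * cos b * ((cosh b)^2 - (sinh b)^2))
       / ((sinh b * cos b)^2 + (cosh b * sin b)^2)"
  proof -
    have X: "of_real b * (1 + \<i>) * Complex (cosh b * cos b) (sinh b * sin b)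
       = Complex (b * (cosh b * cos b) - b * (sinh b * sin b)) (b * (sinh b * sin b) + b * (cosh b * cos b))"
      by (simp add: complex_eq_iff)
    have "(b * (cosh b * cos b) - b * (sinh b * sin b)) * (sinh b * cos b) + (b * (sinh b * sin b) + b * (cosh b * cos b)) * (cosh b * sin b)
       = b * (sinh b * cosh b * ((sin b)^2 + (cos b)^2) + sin b * cos b * ((cosh b)^2 - (sinh b)^2))"
      by algebra
    thus ?thesis unfolding Re_divide sinh_w cosh_w X complex.sel by simp
  qed
  have h2: "(sinh b * cos b)^2 + (cosh b * sin b)^2 = Dn b"
    using norm_sinh_w[of b] unfolding sinh_w cmod_power2 by simp
  have num: "sinh b * cosh b * ((sin b)^2 + (cos b)^2) + sin b * cos b * ((cosh b)^2 - (sinh b)^2) = sinh b * cosh b + sin b * cos b"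
    by (simp only: sin_cos_squared_add hyperbolic_pythagoras mult_1_right)
  show ?thesis by (simp only: h1 h2 num Ab_def)
qed

lemma Dn_double: "Dn b = (cosh (2*b) - cos (2*b)) / 2"
  unfolding Dn_def cosh_double cos_double_sin using hyperbolic_pythagoras[of b]
  by (simp add: algebra_simps)

lemma Ab_fA: "Ab b = fA (2*b) / 2"
proof -
  have "cosh (2*b) - cos (2*b) = 2 * Dn b" unfolding Dn_double by simp
  thus ?thesis unfolding Ab_def fA_def sinh_double sin_double
    by (cases "Dn b = 0") (simp_all add: field_simps)
qed

lemma Dn_gt: assumes "b > 0" shows "Dn b > 2 * b^2"
  using P1[of "2*b"] assms unfolding Dn_double by (simp add: power_mult_distrib)

lemma Dn_pos: "b > 0 \<Longrightarrow> Dn b > 0"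
  using Dn_gt[of b] by (smt (verit) zero_le_power2)

lemma Ab_gt1: assumes "b > 0" shows "Ab b > 1"
proof -
  have "2 * b * (sinh (2*b) + sin (2*b)) > 2 * (cosh (2*b) - cos (2*b))"
    using P2[of "2*b"] assms by simp
  moreover have "cosh (2*b) - cos (2*b) > 0" using cosh_gt_cos[of "2*b"] assms by simp
  ultimately have "fA (2*b) > 2" unfolding fA_def by (simp add: field_simps)
  thus ?thesis unfolding Ab_fA by simp
qed

lemma Ab_mono: "0 < b \<Longrightarrow> b \<le> b' \<Longrightarrow> Ab b \<le> Ab b'"
  unfolding Ab_fA using fA_mono[of "2*b" "2*b'"] by simp

lemma Kb_lt1: assumes "b > 0" shows "Kb b < 1"
proof -
  have "sqrt 2 * b = sqrt (2 * b^2)" using assms by (simp add: real_sqrt_mult)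
  also have "\<dots> < sqrt (Dn b)" using Dn_gt[OF assms] by simp
  finally show ?thesis unfolding Kb_def using Dn_pos[OF assms] by simp
qed

lemma Kb_pos: "b > 0 \<Longrightarrow> Kb b > 0"
  unfolding Kb_def using Dn_pos by simp

lemma Kb_le: assumes "b > 0" shows "Kb b \<le> sqrt 2 * b / sinh b"
proof -
  have "sinh b \<le> sqrt (Dn b)"
    unfolding Dn_def by (rule real_le_rsqrt) simp
  moreover have "sinh b > 0" using assms by simp
  ultimately show ?thesis unfolding Kb_def using assms Dn_pos[OF assms]
    by (intro divide_left_mono) auto
qed

lemma norm_w: "b \<ge> 0 \<Longrightarrow> norm (of_real b * (1 + \<i>)) = sqrt 2 * b"
  by (simp add: norm_mult cmod_def real_sqrt_mult)

lemma csqrt_i: assumes "t \<ge> 0" shows "csqrt (\<i> * of_real t) = of_real (sqrt (t/2)) * (1 + \<i>)"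
proof (rule csqrt_unique)
  define r where "r = sqrt (t/2)"
  have r: "r * r = t/2" unfolding r_def using assms by simp
  show "(of_real (sqrt (t/2)) * (1 + \<i>))^2 = \<i> * of_real t"
    unfolding r_def[symmetric] by (simp add: complex_eq_iff power2_eq_square r)
  show "0 < Re (of_real (sqrt (t/2)) * (1 + \<i>)) \<or> Re (of_real (sqrt (t/2)) * (1 + \<i>)) = 0 \<and> 0 \<le> Im (of_real (sqrt (t/2)) * (1 + \<i>))"
    using assms by auto
qed




lemma pzd_beta_pos: "\<gamma> > 0 \<Longrightarrow> \<sigma> > 0 \<Longrightarrow> L > 0 \<Longrightarrow> m > 0 \<Longrightarrow> pzd_beta \<gamma> \<sigma> L m > 0"
  unfolding pzd_beta_def by simp

lemma pzd_ab:
  fixes m :: nat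
  assumes g: "\<gamma> > 0" and s: "\<sigma> > 0" and l: "L > 0"
  defines "w \<equiv> of_real (pzd_beta \<gamma> \<sigma> L m) * (1 + \<i>)"
  shows "pzd_a \<gamma> \<sigma> L m = w / of_real (\<sigma>\<^sup>2 * L) * (cosh w / sinh w)"
    and "pzd_b \<gamma> \<sigma> L m = w / of_real (\<sigma>\<^sup>2 * L) / sinh w"
proof -
  have e1: "\<i> * of_nat m * of_real \<gamma> = \<i> * complex_of_real (real m * \<gamma>)" by simp
  have e2: "\<i> * of_nat m * of_real (\<gamma> * \<sigma>\<^sup>2) = \<i> * complex_of_real (real m * (\<gamma> * \<sigma>\<^sup>2))" by simp
  have c1: "csqrt (\<i> * of_nat m * of_real \<gamma>) = of_real (sqrt (real m * \<gamma> / 2)) * (1 + \<i>)"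
    unfolding e1 by (rule csqrt_i) (use g in simp)
  have "real m * (\<gamma> * \<sigma>\<^sup>2) / 2 = (real m * \<gamma> / 2) * \<sigma>\<^sup>2" by simp
  hence "sqrt (real m * (\<gamma> * \<sigma>\<^sup>2) / 2) = sqrt (real m * \<gamma> / 2) * \<sigma>"
    using s by (simp only: real_sqrt_mult real_sqrt_abs)
  hence c2: "csqrt (\<i> * of_nat m * of_real (\<gamma> * \<sigma>\<^sup>2)) = of_real (sqrt (real m * \<gamma> / 2) * \<sigma>) * (1 + \<i>)"
    unfolding e2 by (subst csqrt_i) (use g in simp_all)
  have z: "csqrt (\<i> * of_nat m * of_real (\<gamma> * \<sigma>\<^sup>2)) * of_real L = w"
    unfolding c2 w_def pzd_beta_def by simp
  have f: "csqrt (\<i> * of_nat m * of_real \<gamma>) / of_real \<sigma> = w / of_real (\<sigma>\<^sup>2 * L)"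
    unfolding c1 w_def pzd_beta_def using s l by (simp add: field_simps power2_eq_square)
  show "pzd_a \<gamma> \<sigma> L m = w / of_real (\<sigma>\<^sup>2 * L) * (cosh w / sinh w)"
    unfolding pzd_a_def ccoth_def z f ..
  show "pzd_b \<gamma> \<sigma> L m = w / of_real (\<sigma>\<^sup>2 * L) / sinh w"
    unfolding pzd_b_def z f ..
qed

lemma Re_pzd_a:
  assumes g: "\<gamma> > 0" and s: "\<sigma> > 0" and l: "L > 0"
  shows "Re (pzd_a \<gamma> \<sigma> L m) = Ab (pzd_beta \<gamma> \<sigma> L m) / (\<sigma>\<^sup>2 * L)"
proof -
  let ?w = "of_real (pzd_beta \<gamma> \<sigma> L m) * (1 + \<i>)"
  have "pzd_a \<gamma> \<sigma> L m = (?w * cosh ?w / sinh ?w) / of_real (\<sigma>\<^sup>2 * L)"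
    unfolding pzd_ab(1)[OF g s l] by (simp add: field_simps)
  thus ?thesis by (simp only: Re_divide_of_real Re_w_coth)
qed

lemma norm_pzd_b:
  assumes g: "\<gamma> > 0" and s: "\<sigma> > 0" and l: "L > 0"
  shows "norm (pzd_b \<gamma> \<sigma> L m) = Kb (pzd_beta \<gamma> \<sigma> L m) / (\<sigma>\<^sup>2 * L)"
proof -
  define b where "b = pzd_beta \<gamma> \<sigma> L m"
  have b0: "b \<ge> 0" unfolding b_def pzd_beta_def using g s l by simp
  let ?w = "of_real b * (1 + \<i>)"
  have ns: "norm (sinh ?w) = sqrt (Dn b)"
    using norm_sinh_w[of b] by (metis norm_ge_zero real_sqrt_unique)
  have "norm (pzd_b \<gamma> \<sigma> L m) = norm ?w / (\<sigma>\<^sup>2 * L) / norm (sinh ?w)"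
    unfolding pzd_ab(2)[OF g s l] b_def[symmetric] using s l by (simp add: norm_divide norm_mult norm_power)
  also have "\<dots> = Kb b / (\<sigma>\<^sup>2 * L)"
    unfolding ns norm_w[OF b0] Kb_def by simp
  finally show ?thesis unfolding b_def .
qed

lemma pzd_pR_I0: "pzd_pR \<sigma> L r r0 = 2 * r / (\<sigma>\<^sup>2 * L) * exp (- (r\<^sup>2 + r0\<^sup>2) / (\<sigma>\<^sup>2 * L)) * I0 (2 * r * r0 / (\<sigma>\<^sup>2 * L))"
  unfolding pzd_pR_def besselI0_real by simp

lemma C_bound:
  assumes g: "\<gamma> > 0" and s: "\<sigma> > 0" and l: "L > 0" and m: "m > 0" and r: "r \<ge> 0" and r0: "r0 \<ge> 0"
  defines "b \<equiv> pzd_beta \<gamma> \<sigma> L m" and "c \<equiv> \<sigma>\<^sup>2 * L"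
  shows "norm (pzd_C \<gamma> \<sigma> L m r r0) \<le> Kb b / 2 * exp (- (Ab b - 1) * (r\<^sup>2 + r0\<^sup>2) / c) * pzd_pR \<sigma> L r r0"
proof -
  have b0: "b > 0" unfolding b_def using pzd_beta_pos[OF g s l m] .
  have c0: "c > 0" unfolding c_def using s l by simp
  have K: "Kb b > 0" "Kb b < 1" using Kb_pos[OF b0] Kb_lt1[OF b0] by auto
  have nb: "norm (pzd_b \<gamma> \<sigma> L m) = Kb b / c" unfolding b_def c_def using norm_pzd_b[OF g s l] .
  have ra: "Re (pzd_a \<gamma> \<sigma> L m) = Ab b / c" unfolding b_def c_def using Re_pzd_a[OF g s l] .
  let ?s = "r\<^sup>2 + r0\<^sup>2"
  let ?x = "2 * r * r0 / c"
  have ne: "norm (exp (- pzd_a \<gamma> \<sigma> L m * of_real ?s)) = exp (- (Ab b / c) * ?s)"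
    using ra by simp
  have nI: "norm (besselI m (2 * pzd_b \<gamma> \<sigma> L m * of_real (r0 * r))) \<le> I0 ?x"
  proof -
    have "norm (besselI m (2 * pzd_b \<gamma> \<sigma> L m * of_real (r0 * r))) \<le> I0 (norm (2 * pzd_b \<gamma> \<sigma> L m * of_real (r0 * r)))"
      by (rule besselI_bound(2))
    also have "norm (2 * pzd_b \<gamma> \<sigma> L m * of_real (r0 * r)) = 2 * (Kb b / c) * (r0 * r)"
      using r r0 nb by (simp add: norm_mult)
    also have "I0 (2 * (Kb b / c) * (r0 * r)) \<le> I0 ?x"
    proof (rule I0_mono)
      show "0 \<le> 2 * (Kb b / c) * (r0 * r)" using K c0 r r0 by simp
      have "2 * (Kb b / c) * (r0 * r) \<le> 2 * (1 / c) * (r0 * r)"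
        using K c0 r r0 by (intro mult_right_mono mult_left_mono divide_right_mono) auto
      thus "2 * (Kb b / c) * (r0 * r) \<le> ?x" by (simp add: ac_simps)
    qed
    finally show ?thesis .
  qed
  have "norm (pzd_C \<gamma> \<sigma> L m r r0) = r * (Kb b / c) * exp (- (Ab b / c) * ?s)
          * norm (besselI m (2 * pzd_b \<gamma> \<sigma> L m * of_real (r0 * r)))"
    unfolding pzd_C_def norm_mult ne nb using r by simp
  also have "\<dots> \<le> r * (Kb b / c) * exp (- (Ab b / c) * ?s) * I0 ?x"
    using nI K c0 r by (intro mult_left_mono) auto
  also have "\<dots> = Kb b / 2 * exp (- (Ab b - 1) * ?s / c) * (2 * r / c * exp (- ?s / c) * I0 ?x)"
  proof -
    have "exp (- (Ab b / c) * ?s) = exp (- (Ab b - 1) * ?s / c) * exp (- ?s / c)"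
      unfolding exp_add[symmetric] using c0 by (simp add: field_simps)
    thus ?thesis using c0 by (simp add: field_simps)
  qed
  also have "2 * r / c * exp (- ?s / c) * I0 ?x = pzd_pR \<sigma> L r r0"
    unfolding pzd_pR_I0 c_def ..
  finally show ?thesis .
qed




lemma sinh_ge_pow5: assumes "x \<ge> 0" shows "sinh (x::real) \<ge> x^5 / 120"
proof -
  have sm: "(\<lambda>n. if even n then 0 else x ^ n /\<^sub>R fact n) sums sinh x" by (rule sinh_converges)
  have "sum (\<lambda>n. if even n then 0 else x ^ n /\<^sub>R fact n) {5} \<le> suminf (\<lambda>n. if even n then 0 else x ^ n /\<^sub>R fact n)"
    by (rule sum_le_suminf[OF sums_summable[OF sm]]) (use assms in auto)
  moreover have "fact 5 = (120::real)" by (simp add: fact_numeral)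
  ultimately show ?thesis using sums_unique[OF sm] by simp
qed

lemma beta_ge: assumes g: "\<gamma> > 0" and s: "\<sigma> > 0" and l: "L > 0"
  shows "pzd_beta \<gamma> \<sigma> L (Suc n) ^ 4 = (real (Suc n))^2 * (\<gamma>^2 * \<sigma>^4 * L^4 / 4)"
proof -
  have "pzd_beta \<gamma> \<sigma> L (Suc n) ^ 4 = ((sqrt (real (Suc n) * \<gamma> / 2))^2)^2 * \<sigma>^4 * L^4"
    unfolding pzd_beta_def by (simp add: power_mult_distrib flip: power_mult)
  also have "(sqrt (real (Suc n) * \<gamma> / 2))^2 = real (Suc n) * \<gamma> / 2" using g by simp
  also have "(real (Suc n) * \<gamma> / 2)^2 * \<sigma>^4 * L^4 = (real (Suc n))^2 * (\<gamma>^2 * \<sigma>^4 * L^4 / 4)"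
    by (simp add: power_mult_distrib power_divide mult_ac)
  finally show ?thesis .
qed

lemma T_summable: assumes g: "\<gamma> > 0" and s: "\<sigma> > 0" and l: "L > 0"
  shows "summable (\<lambda>n. pzd_beta \<gamma> \<sigma> L (Suc n) / sinh (pzd_beta \<gamma> \<sigma> L (Suc n)))"
proof -
  define K where "K = 480 / (\<gamma>^2 * \<sigma>^4 * L^4)"
  have K0: "K > 0" unfolding K_def using g s l by simp
  have si: "summable (\<lambda>n. inverse (real (Suc n) ^ 2))"
    using inverse_power_summable[of 2, where 'a=real] by (subst summable_Suc_iff) simp
  show ?thesis
  proof (rule summable_comparison_test[OF _ summable_mult[OF si, of K]])
    show "\<exists>N. \<forall>n\<ge>N. norm (pzd_beta \<gamma> \<sigma> L (Suc n) / sinh (pzd_beta \<gamma> \<sigma> L (Suc n))) \<le> K * inverse (real (Suc n) ^ 2)"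
    proof (intro exI allI impI)
      fix n :: nat
      let ?b = "pzd_beta \<gamma> \<sigma> L (Suc n)"
      have b0: "?b > 0" using pzd_beta_pos[OF g s l] by simp
      have sh: "sinh ?b \<ge> ?b^5 / 120" using sinh_ge_pow5 b0 by simp
      have shp: "sinh ?b > 0" using b0 by simp
      have "norm (?b / sinh ?b) = ?b / sinh ?b" using b0 shp by simp
      also have "\<dots> \<le> ?b / (?b^5 / 120)"
        using b0 sh by (intro divide_left_mono) auto
      also have "\<dots> = 120 / ?b^4" using b0 by (simp add: field_simps eval_nat_numeral)
      also have "\<dots> = K * inverse (real (Suc n) ^ 2)"
        unfolding beta_ge[OF g s l] K_def using g s l by (simp add: field_simps)
      finally show "norm (?b / sinh ?b) \<le> K * inverse (real (Suc n) ^ 2)" .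
    qed
  qed
qed

lemma Re_term_le: "\<bar>Re (C * exp (\<i> * of_nat k * of_real t))\<bar> \<le> norm C"
proof -
  have "\<bar>Re (C * exp (\<i> * of_nat k * of_real t))\<bar> \<le> norm (C * exp (\<i> * of_nat k * of_real t))"
    by (rule abs_Re_le_cmod)
  also have "\<dots> = norm C" by (simp add: norm_mult)
  finally show ?thesis .
qed

lemma pR_nonneg: "\<sigma> > 0 \<Longrightarrow> L > 0 \<Longrightarrow> r \<ge> 0 \<Longrightarrow> pzd_pR \<sigma> L r r0 \<ge> 0"
  unfolding pzd_pR_I0 using I0_ge1 by (intro mult_nonneg_nonneg) (auto intro: order_trans[OF zero_le_one])

lemma pR_pos: "\<sigma> > 0 \<Longrightarrow> L > 0 \<Longrightarrow> r > 0 \<Longrightarrow> pzd_pR \<sigma> L r r0 > 0"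
  unfolding pzd_pR_I0 using I0_ge1 by (intro mult_pos_pos) (auto intro: less_le_trans[OF zero_less_one])

lemma pR_upper: assumes s: "\<sigma> > 0" and l: "L > 0" and r: "r \<ge> 0" and r0: "r0 \<ge> 0"
  shows "pzd_pR \<sigma> L r r0 \<le> 2 * r / (\<sigma>\<^sup>2 * L) * exp (- (r - r0)\<^sup>2 / (\<sigma>\<^sup>2 * L))"
proof -
  define c where "c = \<sigma>\<^sup>2 * L"
  have c0: "c > 0" unfolding c_def using s l by simp
  have "pzd_pR \<sigma> L r r0 = 2 * r / c * exp (- (r\<^sup>2 + r0\<^sup>2) / c) * I0 (2 * r * r0 / c)"
    unfolding pzd_pR_I0 c_def ..
  also have "\<dots> \<le> 2 * r / c * exp (- (r\<^sup>2 + r0\<^sup>2) / c) * exp (2 * r * r0 / c)"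
    using r r0 c0 I0_le_exp[of "2 * r * r0 / c"] by (intro mult_left_mono) auto
  also have "2 * r / c * exp (- (r\<^sup>2 + r0\<^sup>2) / c) * exp (2 * r * r0 / c) = 2 * r / c * exp (- (r - r0)\<^sup>2 / c)"
  proof -
    have "exp (- (r\<^sup>2 + r0\<^sup>2) / c) * exp (2 * r * r0 / c) = exp (- (r - r0)\<^sup>2 / c)"
      unfolding exp_add[symmetric] using c0 by (simp add: power2_diff field_simps)
    thus ?thesis by (simp only: mult.assoc)
  qed
  finally show ?thesis unfolding c_def .
qed




lemma beta_mono: "\<gamma> > 0 \<Longrightarrow> \<sigma> > 0 \<Longrightarrow> L > 0 \<Longrightarrow> pzd_beta \<gamma> \<sigma> L (Suc 0) \<le> pzd_beta \<gamma> \<sigma> L (Suc n)"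
  unfolding pzd_beta_def by (intro mult_right_mono) (auto intro: divide_right_mono)

lemma series_facts:
  fixes \<phi> \<phi>0 :: real
  assumes g: "\<gamma> > 0" and s: "\<sigma> > 0" and l: "L > 0" and r: "r \<ge> 0" and r0: "r0 \<ge> 0"
  defines "T \<equiv> \<lambda>n. pzd_beta \<gamma> \<sigma> L (Suc n) / sinh (pzd_beta \<gamma> \<sigma> L (Suc n))"
    and "u \<equiv> \<lambda>n. Kb (pzd_beta \<gamma> \<sigma> L (Suc n)) / 2
          * exp (- (Ab (pzd_beta \<gamma> \<sigma> L (Suc n)) - 1) * (r\<^sup>2 + r0\<^sup>2) / (\<sigma>\<^sup>2 * L)) * pzd_pR \<sigma> L r r0"
    and "tm \<equiv> \<lambda>n. Re (pzd_C \<gamma> \<sigma> L (Suc n) r r0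
          * exp (\<i> * of_nat (Suc n) * of_real (\<phi> - \<phi>0 - \<gamma> * r0\<^sup>2 * L)))"
  shows "\<And>n. \<bar>tm n\<bar> \<le> u n" "\<And>n. u n \<le> T n * (sqrt 2 / 2 * pzd_pR \<sigma> L r r0)"
    "\<And>n. u n \<le> T n * (sqrt 2 / 2 * exp (- (Ab (pzd_beta \<gamma> \<sigma> L (Suc 0)) - 1) * r0\<^sup>2 / (\<sigma>\<^sup>2 * L)) * pzd_pR \<sigma> L r r0)"
    "summable u" "summable tm" "\<And>n. u n \<ge> 0"
proof -
  define c where "c = \<sigma>\<^sup>2 * L"
  have c0: "c > 0" unfolding c_def using s l by simp
  have pR0: "pzd_pR \<sigma> L r r0 \<ge> 0" using pR_nonneg[OF s l r] .
  have sT: "summable T" unfolding T_def by (rule T_summable[OF g s l])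
  show tu: "\<bar>tm n\<bar> \<le> u n" for n
    unfolding tm_def u_def using Re_term_le C_bound[OF g s l _ r r0, of "Suc n"] order_trans by blast
  show un: "u n \<ge> 0" for n
    unfolding u_def using pR0 Kb_pos[OF pzd_beta_pos[OF g s l, of "Suc n"]] by simp
  have KT: "Kb (pzd_beta \<gamma> \<sigma> L (Suc n)) / 2 \<le> sqrt 2 / 2 * T n" for n
    using Kb_le[OF pzd_beta_pos[OF g s l, of "Suc n"]] unfolding T_def by simp
  show ut: "u n \<le> T n * (sqrt 2 / 2 * pzd_pR \<sigma> L r r0)" for n
  proof -
    let ?b = "pzd_beta \<gamma> \<sigma> L (Suc n)"
    have A1: "Ab ?b > 1" using Ab_gt1 pzd_beta_pos[OF g s l] by simp
    have "- (Ab ?b - 1) * (r\<^sup>2 + r0\<^sup>2) / (\<sigma>\<^sup>2 * L) \<le> 0"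
      using A1 s l by (intro divide_nonpos_pos mult_nonpos_nonneg) auto
    hence "exp (- (Ab ?b - 1) * (r\<^sup>2 + r0\<^sup>2) / (\<sigma>\<^sup>2 * L)) \<le> 1"
      by simp
    hence "u n \<le> Kb ?b / 2 * 1 * pzd_pR \<sigma> L r r0"
      unfolding u_def using pR0 Kb_pos[OF pzd_beta_pos[OF g s l, of "Suc n"]]
      by (intro mult_right_mono mult_left_mono) auto
    also have "\<dots> \<le> sqrt 2 / 2 * T n * pzd_pR \<sigma> L r r0"
      using KT[of n] pR0 by (intro mult_right_mono) auto
    finally show ?thesis by (simp add: mult_ac)
  qed
  show "u n \<le> T n * (sqrt 2 / 2 * exp (- (Ab (pzd_beta \<gamma> \<sigma> L (Suc 0)) - 1) * r0\<^sup>2 / (\<sigma>\<^sup>2 * L)) * pzd_pR \<sigma> L r r0)" for n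
  proof -
    let ?b = "pzd_beta \<gamma> \<sigma> L (Suc n)"
    let ?b1 = "pzd_beta \<gamma> \<sigma> L (Suc 0)"
    have A1: "Ab ?b1 > 1" using Ab_gt1 pzd_beta_pos[OF g s l] by simp
    have Am: "Ab ?b1 \<le> Ab ?b"
      using Ab_mono[OF pzd_beta_pos[OF g s l] beta_mono[OF g s l]] by simp
    have "(Ab ?b1 - 1) * r0\<^sup>2 \<le> (Ab ?b1 - 1) * (r\<^sup>2 + r0\<^sup>2)"
      using A1 by (intro mult_left_mono) auto
    also have "\<dots> \<le> (Ab ?b - 1) * (r\<^sup>2 + r0\<^sup>2)"
      using Am by (intro mult_right_mono) auto
    finally have "(Ab ?b1 - 1) * r0\<^sup>2 / c \<le> (Ab ?b - 1) * (r\<^sup>2 + r0\<^sup>2) / c"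
      using c0 by (intro divide_right_mono) auto
    hence "- (Ab ?b - 1) * (r\<^sup>2 + r0\<^sup>2) / c \<le> - (Ab ?b1 - 1) * r0\<^sup>2 / c"
      by (simp only: minus_mult_left minus_divide_left neg_le_iff_le)
    hence e: "exp (- (Ab ?b - 1) * (r\<^sup>2 + r0\<^sup>2) / c) \<le> exp (- (Ab ?b1 - 1) * r0\<^sup>2 / c)"
      by (simp only: exp_le_cancel_iff)
    have "u n \<le> Kb ?b / 2 * exp (- (Ab ?b1 - 1) * r0\<^sup>2 / c) * pzd_pR \<sigma> L r r0"
      unfolding u_def c_def[symmetric] using e pR0 Kb_pos[OF pzd_beta_pos[OF g s l, of "Suc n"]]
      by (intro mult_right_mono mult_left_mono) auto
    also have "\<dots> \<le> sqrt 2 / 2 * T n * exp (- (Ab ?b1 - 1) * r0\<^sup>2 / c) * pzd_pR \<sigma> L r r0"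
      using KT[of n] pR0 by (intro mult_right_mono) auto
    finally show ?thesis unfolding c_def by (simp add: mult_ac)
  qed
  show su: "summable u"
    by (rule summable_comparison_test[OF _ summable_mult2[OF sT, of "sqrt 2 / 2 * pzd_pR \<sigma> L r r0"]])
       (use un ut in auto)
  show "summable tm"
    by (rule summable_comparison_test[OF _ su]) (use tu in auto)
qed

lemma upper_bound:
  assumes g: "\<gamma> > 0" and s: "\<sigma> > 0" and l: "L > 0" and r: "r > 0" and r0: "r0 \<ge> 0"
  shows "pzd_p \<gamma> \<sigma> L r \<phi> r0 \<phi>0 < pzd_ku \<gamma> \<sigma> L * pzd_pR \<sigma> L r r0"
proof -
  define T where "T = (\<lambda>n. pzd_beta \<gamma> \<sigma> L (Suc n) / sinh (pzd_beta \<gamma> \<sigma> L (Suc n)))"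
  define u where "u = (\<lambda>n. Kb (pzd_beta \<gamma> \<sigma> L (Suc n)) / 2
          * exp (- (Ab (pzd_beta \<gamma> \<sigma> L (Suc n)) - 1) * (r\<^sup>2 + r0\<^sup>2) / (\<sigma>\<^sup>2 * L)) * pzd_pR \<sigma> L r r0)"
  define tm where "tm = (\<lambda>n. Re (pzd_C \<gamma> \<sigma> L (Suc n) r r0
          * exp (\<i> * of_nat (Suc n) * of_real (\<phi> - \<phi>0 - \<gamma> * r0\<^sup>2 * L))))"
  define P where "P = pzd_pR \<sigma> L r r0"
  define v where "v = (\<lambda>n. T n * (sqrt 2 / 2 * P))"
  have F1: "\<And>n. \<bar>tm n\<bar> \<le> u n" unfolding tm_def u_def by (rule series_facts(1)[OF g s l less_imp_le[OF r] r0])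
  have F2: "\<And>n. u n \<le> T n * (sqrt 2 / 2 * P)" unfolding T_def u_def P_def by (rule series_facts(2)[OF g s l less_imp_le[OF r] r0])
  have F4: "summable u" unfolding u_def by (rule series_facts(4)[OF g s l less_imp_le[OF r] r0])
  have F5: "summable tm" unfolding tm_def by (rule series_facts(5)[OF g s l less_imp_le[OF r] r0])
  note F = F1 F2 F2 F4 F5
  have P0: "P > 0" unfolding P_def using pR_pos[OF s l r] .
  have sT: "summable T" unfolding T_def by (rule T_summable[OF g s l])
  have sv: "summable v" unfolding v_def by (rule summable_mult2[OF sT])
  have "suminf tm \<le> suminf u"
    by (rule suminf_le[OF _ F(5) F(4)]) (use F(1) in \<open>auto simp: abs_le_iff\<close>)
  also have "suminf u < suminf v"
  proof -
    let ?b = "pzd_beta \<gamma> \<sigma> L (Suc 0)"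
    have b0: "?b > 0" using pzd_beta_pos[OF g s l] by simp
    have "0 < (Ab ?b - 1) * (r\<^sup>2 + r0\<^sup>2) / (\<sigma>\<^sup>2 * L)"
      using Ab_gt1[OF b0] s l r by (intro divide_pos_pos mult_pos_pos add_pos_nonneg) auto
    hence "- (Ab ?b - 1) * (r\<^sup>2 + r0\<^sup>2) / (\<sigma>\<^sup>2 * L) < 0"
      by (simp only: minus_mult_left minus_divide_left neg_less_0_iff_less)
    hence "exp (- (Ab ?b - 1) * (r\<^sup>2 + r0\<^sup>2) / (\<sigma>\<^sup>2 * L)) < 1"
      by (simp only: exp_less_one_iff)
    hence "u 0 < Kb ?b / 2 * 1 * P"
      unfolding u_def P_def[symmetric] using P0 Kb_pos[OF b0]
      by (intro mult_strict_right_mono mult_strict_left_mono) auto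
    also have "\<dots> \<le> v 0"
    proof -
      have kt: "Kb ?b / 2 \<le> sqrt 2 / 2 * T 0" using Kb_le[OF b0] unfolding T_def by simp
      have "Kb ?b / 2 * P \<le> sqrt 2 / 2 * T 0 * P" using P0 by (intro mult_right_mono[OF kt]) simp
      thus ?thesis unfolding v_def by (simp add: mult_ac)
    qed
    finally have "0 < v 0 - u 0" by simp
    have sd: "summable (\<lambda>n. v n - u n)" by (rule summable_diff[OF sv F(4)])
    have nn: "\<And>n. 0 \<le> v n - u n" using F(2) unfolding v_def by simp
    have "0 < (\<Sum>n. v n - u n)" using suminf_pos_iff[OF sd] nn \<open>0 < v 0 - u 0\<close> by blast
    thus ?thesis using suminf_diff[OF sv F(4)] by simp
  qed
  also have "suminf v = suminf T * (sqrt 2 / 2 * P)"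
    unfolding v_def by (rule suminf_mult2[OF sT, symmetric])
  finally have "suminf tm < suminf T * (sqrt 2 / 2 * P)" .
  thus ?thesis
    unfolding pzd_p_def pzd_ku_def tm_def[symmetric] T_def[symmetric] P_def[symmetric]
    using P0 by (simp add: field_simps)
qed

lemma lower_bound:
  assumes g: "\<gamma> > 0" and s: "\<sigma> > 0" and l: "L > 0" and r: "r \<ge> 0" and r0: "r0 \<ge> 0"
  shows "pzd_p \<gamma> \<sigma> L r \<phi> r0 \<phi>0 \<ge> 1 / (2 * pi) * pzd_pR \<sigma> L r r0 * (1 - pzd_xi \<gamma> \<sigma> L r0)"
proof -
  define T where "T = (\<lambda>n. pzd_beta \<gamma> \<sigma> L (Suc n) / sinh (pzd_beta \<gamma> \<sigma> L (Suc n)))"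
  define u where "u = (\<lambda>n. Kb (pzd_beta \<gamma> \<sigma> L (Suc n)) / 2
          * exp (- (Ab (pzd_beta \<gamma> \<sigma> L (Suc n)) - 1) * (r\<^sup>2 + r0\<^sup>2) / (\<sigma>\<^sup>2 * L)) * pzd_pR \<sigma> L r r0)"
  define tm where "tm = (\<lambda>n. Re (pzd_C \<gamma> \<sigma> L (Suc n) r r0
          * exp (\<i> * of_nat (Suc n) * of_real (\<phi> - \<phi>0 - \<gamma> * r0\<^sup>2 * L))))"
  define P where "P = pzd_pR \<sigma> L r r0"
  define E where "E = exp (- (Ab (pzd_beta \<gamma> \<sigma> L (Suc 0)) - 1) * r0\<^sup>2 / (\<sigma>\<^sup>2 * L))"
  define w where "w = (\<lambda>n. T n * (sqrt 2 / 2 * E * P))"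
  have F1: "\<And>n. \<bar>tm n\<bar> \<le> u n" unfolding tm_def u_def by (rule series_facts(1)[OF g s l r r0])
  have F3: "\<And>n. u n \<le> T n * (sqrt 2 / 2 * E * P)" unfolding T_def u_def P_def E_def by (rule series_facts(3)[OF g s l r r0])
  have F4: "summable u" unfolding u_def by (rule series_facts(4)[OF g s l r r0])
  have F5: "summable tm" unfolding tm_def by (rule series_facts(5)[OF g s l r r0])
  note F = F1 F3 F3 F4 F5
  have sT: "summable T" unfolding T_def by (rule T_summable[OF g s l])
  have sw: "summable w" unfolding w_def by (rule summable_mult2[OF sT])
  have "- suminf w \<le> suminf tm"
    unfolding suminf_minus[OF sw, symmetric]
    by (rule suminf_le[OF _ summable_minus[OF sw] F(5)])
       (use F1 F3 in \<open>unfold w_def abs_le_iff, smt (verit)\<close>)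
  moreover have "suminf w = suminf T * (sqrt 2 / 2 * E * P)"
    unfolding w_def by (rule suminf_mult2[OF sT, symmetric])
  moreover have "pzd_xi \<gamma> \<sigma> L r0 = sqrt 2 * E * suminf T"
  proof -
    have "Re (pzd_a \<gamma> \<sigma> L 1) = Ab (pzd_beta \<gamma> \<sigma> L (Suc 0)) / (\<sigma>\<^sup>2 * L)"
      using Re_pzd_a[OF g s l, of 1] by simp
    hence "- (Re (pzd_a \<gamma> \<sigma> L 1) - 1 / (\<sigma>\<^sup>2 * L)) * r0\<^sup>2 = - (Ab (pzd_beta \<gamma> \<sigma> L (Suc 0)) - 1) * r0\<^sup>2 / (\<sigma>\<^sup>2 * L)"
      by (simp add: field_simps diff_divide_distrib)
    thus ?thesis unfolding pzd_xi_def E_def T_def by simp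
  qed
  ultimately have h: "suminf tm \<ge> - (suminf T * (sqrt 2 / 2 * E * P))"
    and xi: "pzd_xi \<gamma> \<sigma> L r0 = sqrt 2 * E * suminf T" by simp_all
  have "1/pi * suminf tm \<ge> 1/pi * (- (suminf T * (sqrt 2 / 2 * E * P)))"
    by (rule mult_left_mono[OF h]) simp
  moreover have "1 / (2*pi) * P * (1 - sqrt 2 * E * suminf T) = 1/(2*pi) * P + 1/pi * (- (suminf T * (sqrt 2/2 * E * P)))"
    by (simp add: field_simps)
  ultimately show ?thesis
    unfolding pzd_p_def tm_def[symmetric] P_def[symmetric] xi by linarith
qed

lemma xi_limit:
  assumes g: "\<gamma> > 0" and s: "\<sigma> > 0" and l: "L > 0"
  shows "(pzd_xi \<gamma> \<sigma> L \<longlongrightarrow> 0) at_top"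
proof -
  define k where "k = Re (pzd_a \<gamma> \<sigma> L 1) - 1 / (\<sigma>\<^sup>2 * L)"
  define S where "S = (\<Sum>n. pzd_beta \<gamma> \<sigma> L (Suc n) / sinh (pzd_beta \<gamma> \<sigma> L (Suc n)))"
  have "k = (Ab (pzd_beta \<gamma> \<sigma> L (Suc 0)) - 1) / (\<sigma>\<^sup>2 * L)"
    unfolding k_def using Re_pzd_a[OF g s l, of 1] by (simp add: diff_divide_distrib)
  moreover have "Ab (pzd_beta \<gamma> \<sigma> L (Suc 0)) > 1" using Ab_gt1 pzd_beta_pos[OF g s l] by simp
  ultimately have k0: "k > 0" using s l by simp
  have "((\<lambda>x::real. sqrt 2 * exp (- k * x\<^sup>2) * S) \<longlongrightarrow> 0) at_top"
    using k0 by real_asymp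
  moreover have "pzd_xi \<gamma> \<sigma> L = (\<lambda>x. sqrt 2 * exp (- k * x\<^sup>2) * S)"
    unfolding pzd_xi_def k_def S_def ..
  ultimately show ?thesis by simp
qed

theorem mainTheorem7:
  fixes \<gamma> \<sigma> L :: real
  assumes "\<gamma> > 0" and "\<sigma> > 0" and "L > 0"
  shows "summable (\<lambda>n. pzd_beta \<gamma> \<sigma> L (Suc n) / sinh (pzd_beta \<gamma> \<sigma> L (Suc n)))
    \<and> (\<forall>r r0 \<phi> \<phi>0. r > 0 \<longrightarrow> r0 \<ge> 0 \<longrightarrow> \<phi> \<in> {0..<2*pi} \<longrightarrow> \<phi>0 \<in> {0..<2*pi} \<longrightarrow>
         pzd_p \<gamma> \<sigma> L r \<phi> r0 \<phi>0 < pzd_ku \<gamma> \<sigma> L * pzd_pR \<sigma> L r r0)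
    \<and> (\<forall>r r0. r \<ge> 0 \<longrightarrow> r0 \<ge> 0 \<longrightarrow>
         pzd_pR \<sigma> L r r0 \<le> 2 * r / (\<sigma>\<^sup>2 * L) * exp (- (r - r0)\<^sup>2 / (\<sigma>\<^sup>2 * L))
       \<and> 2 * r / (\<sigma>\<^sup>2 * L) * exp (- (r - r0)\<^sup>2 / (\<sigma>\<^sup>2 * L)) \<le> 2 * r / (\<sigma>\<^sup>2 * L))
    \<and> (\<forall>r r0 \<phi> \<phi>0. r \<ge> 0 \<longrightarrow> r0 \<ge> 0 \<longrightarrow>
         pzd_p \<gamma> \<sigma> L r \<phi> r0 \<phi>0 \<ge> 1 / (2 * pi) * pzd_pR \<sigma> L r r0 * (1 - pzd_xi \<gamma> \<sigma> L r0))
    \<and> (pzd_xi \<gamma> \<sigma> L \<longlongrightarrow> 0) at_top"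
proof (intro conjI allI impI)
  show "summable (\<lambda>n. pzd_beta \<gamma> \<sigma> L (Suc n) / sinh (pzd_beta \<gamma> \<sigma> L (Suc n)))"
    by (rule T_summable[OF assms])
  show "pzd_p \<gamma> \<sigma> L r \<phi> r0 \<phi>0 < pzd_ku \<gamma> \<sigma> L * pzd_pR \<sigma> L r r0"
    if "r > 0" "r0 \<ge> 0" for r r0 \<phi> \<phi>0
    by (rule upper_bound[OF assms that])
  show "pzd_pR \<sigma> L r r0 \<le> 2 * r / (\<sigma>\<^sup>2 * L) * exp (- (r - r0)\<^sup>2 / (\<sigma>\<^sup>2 * L))"
    if "r \<ge> 0" "r0 \<ge> 0" for r r0
    by (rule pR_upper[OF assms(2,3) that])
  show "2 * r / (\<sigma>\<^sup>2 * L) * exp (- (r - r0)\<^sup>2 / (\<sigma>\<^sup>2 * L)) \<le> 2 * r / (\<sigma>\<^sup>2 * L)"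
    if "r \<ge> 0" "r0 \<ge> 0" for r r0
  proof -
    have "exp (- (r - r0)\<^sup>2 / (\<sigma>\<^sup>2 * L)) \<le> 1" using assms by simp
    moreover have "2 * r / (\<sigma>\<^sup>2 * L) \<ge> 0" using assms that by simp
    ultimately show ?thesis using mult_left_mono[of _ 1 "2 * r / (\<sigma>\<^sup>2 * L)"] by simp
  qed
  show "pzd_p \<gamma> \<sigma> L r \<phi> r0 \<phi>0 \<ge> 1 / (2 * pi) * pzd_pR \<sigma> L r r0 * (1 - pzd_xi \<gamma> \<sigma> L r0)"
    if "r \<ge> 0" "r0 \<ge> 0" for r r0 \<phi> \<phi>0
    by (rule lower_bound[OF assms that])
  show "(pzd_xi \<gamma> \<sigma> L \<longlongrightarrow> 0) at_top" by (rule xi_limit[OF assms])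
qed


end
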